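(* Let $v_3:\mathbb{P}(\mathbb{K}^2)\hookrightarrow\mathbb{P}(\operatorname{Sym}^3\mathbb{K}^2)\cong\mathbb{P}^3$ be the Veronese embedding and let $L\subseteq\mathbb{P}^3$ be a line not intersecting $v_3(\mathbb{P}^1)$. Then there exist coordinates (linear forms) $x,y$ on $\mathbb{P}^1$ and scalars $a,b\in\mathbb{K}$ such that $L$ is spanned by the two points $[x^3+ay^3]$ and $[x^3+b(x+y)^3]$.
   Context: $\mathbb{K}$ is an algebraically closed field of characteristic zero; points of $\mathbb{P}(\operatorname{Sym}^3\mathbb{K}^2)$ are identified with binary cubic forms up to scalar, and $v_3([\ell])=[\ell^3]$. *)

theory Defs
  imports "HOL-Computational_Algebra.Polynomial"
begin

text \<open>Binary cubic forms over K are represented as their evaluation functions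
  K x K -> K (K is infinite, so this determines the coefficients).\<close>

definition is_cubic_form :: "('a::comm_ring_1 \<times> 'a \<Rightarrow> 'a) \<Rightarrow> bool" where
  "is_cubic_form f \<longleftrightarrow> (\<exists>c0 c1 c2 c3. f = (\<lambda>(X, Y). c0 * X^3 + c1 * X^2 * Y + c2 * X * Y^2 + c3 * Y^3))"

definition linform :: "'a::comm_ring_1 \<Rightarrow> 'a \<Rightarrow> ('a \<times> 'a \<Rightarrow> 'a)" where
  "linform p q = (\<lambda>(X, Y). p * X + q * Y)"

text \<open>Linear span of two forms (a line in P(Sym^3 K^2), as the 2-dim subspace).\<close>
definition span2 :: "('b \<Rightarrow> 'a::comm_ring_1) \<Rightarrow> ('b \<Rightarrow> 'a) \<Rightarrow> ('b \<Rightarrow> 'a) set" where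
  "span2 f g = {h. \<exists>\<alpha> \<beta>. h = (\<lambda>v. \<alpha> * f v + \<beta> * g v)}"

definition on_veronese :: "('a::comm_ring_1 \<times> 'a \<Rightarrow> 'a) \<Rightarrow> bool" where
  "on_veronese h \<longleftrightarrow> h \<noteq> (\<lambda>_. 0) \<and> (\<exists>c p q. h = (\<lambda>v. c * (linform p q v)^3))"

end

theory Submission
  imports Defs
begin


definition cub :: "'a::comm_ring_1 \<Rightarrow> 'a \<Rightarrow> 'a \<Rightarrow> 'a \<Rightarrow> ('a \<times> 'a \<Rightarrow> 'a)" where
  "cub c0 c1 c2 c3 = (\<lambda>(X, Y). c0 * X^3 + c1 * X^2 * Y + c2 * X * Y^2 + c3 * Y^3)"

definition sh :: "'a::comm_ring_1 \<Rightarrow> ('a \<times> 'a \<Rightarrow> 'a) \<Rightarrow> ('a \<times> 'a \<Rightarrow> 'a)" where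
  "sh u F = (\<lambda>(X, Y). F (X - u * Y, Y))"

definition concl :: "('a::comm_ring_1 \<times> 'a \<Rightarrow> 'a) \<Rightarrow> ('a \<times> 'a \<Rightarrow> 'a) \<Rightarrow> bool" where
  "concl f g \<longleftrightarrow> (\<exists>p q r s a b. p * s - q * r \<noteq> 0 \<and>
           span2 f g =
             span2 (\<lambda>v. (linform p q v)^3 + a * (linform r s v)^3)
                   (\<lambda>v. (linform p q v)^3 + b * (linform p q v + linform r s v)^3))"

lemma sh_sh: "sh (-u) (sh u F) = F" "sh u (sh (-u) F) = F"
  by (auto simp: sh_def fun_eq_iff algebra_simps)

lemma sh_cub: "sh u (cub c0 c1 c2 c3) =
   cub c0 (c1 - 3*u*c0) (c2 - 2*u*c1 + 3*u^2*c0) (c3 - u*c2 + u^2*c1 - u^3*c0)"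
  by (auto simp: sh_def cub_def fun_eq_iff power2_eq_square power3_eq_cube algebra_simps)

lemma sh_lin: "(\<lambda>v. F (sh u G v)) = sh u (\<lambda>v. F (G v))"
  by (auto simp: sh_def fun_eq_iff)

lemma mem_span2_sh: "h \<in> span2 (sh u f) (sh u g) \<longleftrightarrow> sh (-u) h \<in> span2 f g"
proof
  assume "h \<in> span2 (sh u f) (sh u g)"
  then obtain \<alpha> \<beta> where h: "h = (\<lambda>v. \<alpha> * sh u f v + \<beta> * sh u g v)" by (auto simp: span2_def)
  have "sh (-u) h = (\<lambda>v. \<alpha> * f v + \<beta> * g v)"
    by (auto simp: h sh_def fun_eq_iff)
  then show "sh (-u) h \<in> span2 f g" by (auto simp: span2_def)
next
  assume "sh (-u) h \<in> span2 f g"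
  then obtain \<alpha> \<beta> where h: "sh (-u) h = (\<lambda>v. \<alpha> * f v + \<beta> * g v)" by (auto simp: span2_def)
  have "h = sh u (sh (-u) h)" by (simp add: sh_sh)
  also have "\<dots> = sh u (\<lambda>v. \<alpha> * f v + \<beta> * g v)" by (simp only: h)
  also have "\<dots> = (\<lambda>v. \<alpha> * sh u f v + \<beta> * sh u g v)"
    by (auto simp: sh_def fun_eq_iff)
  finally show "h \<in> span2 (sh u f) (sh u g)" by (auto simp: span2_def)
qed

lemma span2_sh_eq:
  assumes "span2 f g = span2 A B"
  shows "span2 (sh u f) (sh u g) = span2 (sh u A) (sh u B)"
  using assms by (auto simp: mem_span2_sh)

lemma on_veronese_sh:
  assumes "on_veronese h" shows "on_veronese (sh u h)"
proof -
  from assms obtain c p q where nz: "h \<noteq> (\<lambda>_. 0)" and h: "h = (\<lambda>v. c * (linform p q v)^3)"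
    by (auto simp: on_veronese_def)
  have "sh u h = (\<lambda>v. c * (linform p (q - u*p) v)^3)"
    by (auto simp: h sh_def linform_def fun_eq_iff algebra_simps)
  moreover have "sh u h \<noteq> (\<lambda>_. 0)"
  proof
    assume "sh u h = (\<lambda>_. 0)"
    then have "sh (-u) (sh u h) = (\<lambda>_. 0)" by (auto simp: sh_def fun_eq_iff)
    with nz show False by (simp add: sh_sh)
  qed
  ultimately show ?thesis by (auto simp: on_veronese_def)
qed

lemma concl_sh:
  assumes "concl (sh u f) (sh u g)" shows "concl f g"
proof -
  from assms obtain p q r s a b where det: "p * s - q * r \<noteq> 0" and
    eq: "span2 (sh u f) (sh u g) =
             span2 (\<lambda>v. (linform p q v)^3 + a * (linform r s v)^3)
                   (\<lambda>v. (linform p q v)^3 + b * (linform p q v + linform r s v)^3)"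
    by (auto simp: concl_def)
  from span2_sh_eq[OF eq, of "-u"]
  have "span2 f g = span2 (sh (-u) (\<lambda>v. (linform p q v)^3 + a * (linform r s v)^3))
         (sh (-u) (\<lambda>v. (linform p q v)^3 + b * (linform p q v + linform r s v)^3))"
    by (simp add: sh_sh)
  also have "sh (-u) (\<lambda>v. (linform p q v)^3 + a * (linform r s v)^3)
     = (\<lambda>v. (linform p (q + u*p) v)^3 + a * (linform r (s + u*r) v)^3)"
    by (auto simp: sh_def linform_def fun_eq_iff algebra_simps)
  also have "sh (-u) (\<lambda>v. (linform p q v)^3 + b * (linform p q v + linform r s v)^3)
     = (\<lambda>v. (linform p (q + u*p) v)^3 + b * (linform p (q + u*p) v + linform r (s + u*r) v)^3)"
    by (auto simp: sh_def linform_def fun_eq_iff algebra_simps)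
  finally show ?thesis unfolding concl_def
    using det by (intro exI[of _ p] exI[of _ "q + u*p"] exI[of _ r] exI[of _ "s + u*r"] exI[of _ a] exI[of _ b])
      (simp add: algebra_simps)
qed

lemma span2_basis:
  fixes f g :: "'b \<Rightarrow> 'a::field"
  assumes "u1 * v2 - u2 * v1 \<noteq> 0"
  shows "span2 f g = span2 (\<lambda>v. u1 * f v + v1 * g v) (\<lambda>v. u2 * f v + v2 * g v)"
proof
  show "span2 (\<lambda>v. u1 * f v + v1 * g v) (\<lambda>v. u2 * f v + v2 * g v) \<subseteq> span2 f g"
  proof
    fix h assume "h \<in> span2 (\<lambda>v. u1 * f v + v1 * g v) (\<lambda>v. u2 * f v + v2 * g v)"
    then obtain \<alpha> \<beta> where h: "h = (\<lambda>v. \<alpha> * (u1 * f v + v1 * g v) + \<beta> * (u2 * f v + v2 * g v))"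
      by (auto simp: span2_def)
    show "h \<in> span2 f g" unfolding span2_def
      by (rule CollectI, rule exI[of _ "\<alpha>*u1 + \<beta>*u2"], rule exI[of _ "\<alpha>*v1 + \<beta>*v2"])
        (auto simp: h fun_eq_iff algebra_simps)
  qed
next
  show "span2 f g \<subseteq> span2 (\<lambda>v. u1 * f v + v1 * g v) (\<lambda>v. u2 * f v + v2 * g v)"
  proof
    fix h assume "h \<in> span2 f g"
    then obtain \<alpha> \<beta> where h: "h = (\<lambda>v. \<alpha> * f v + \<beta> * g v)"
      by (auto simp: span2_def)
    define D where "D = u1 * v2 - u2 * v1"
    have D: "D \<noteq> 0" using assms by (simp add: D_def)
    show "h \<in> span2 (\<lambda>v. u1 * f v + v1 * g v) (\<lambda>v. u2 * f v + v2 * g v)" unfolding span2_def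
    proof (rule CollectI, rule exI, rule exI, rule ext)
      fix x
      have num: "(\<alpha>*v2 - \<beta>*u2)*(u1*f x + v1*g x) + (\<beta>*u1 - \<alpha>*v1)*(u2*f x + v2*g x) = D*(\<alpha>*f x + \<beta>*g x)"
        unfolding D_def by (simp add: algebra_simps)
      have "(\<alpha>*v2 - \<beta>*u2)/D*(u1*f x + v1*g x) + (\<beta>*u1 - \<alpha>*v1)/D*(u2*f x + v2*g x) = 
            ((\<alpha>*v2 - \<beta>*u2)*(u1*f x + v1*g x) + (\<beta>*u1 - \<alpha>*v1)*(u2*f x + v2*g x)) / D"
        by (simp add: add_divide_distrib)
      also have "\<dots> = \<alpha>*f x + \<beta>*g x" using D by (simp add: num)
      finally show "h x = (\<alpha>*v2 - \<beta>*u2)/D*(u1*f x + v1*g x) + (\<beta>*u1 - \<alpha>*v1)/D*(u2*f x + v2*g x)"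
        by (simp add: h)
    qed
  qed
qed



lemma H_form:
  assumes "3*k^2 = 3*b*k + d"
  shows "(\<lambda>v. 3*k * cub a b 1 0 v + cub c d 0 1 v) =
         (\<lambda>v. (3*k*a + c - k^3) * (linform 1 0 v)^3 + (linform k 1 v)^3)"
proof (rule ext, clarify)
  fix X Y :: 'a
  have "3*k*(b*X^2*Y) + d*X^2*Y = 3*k^2*X^2*Y" using assms
    by (metis (no_types, lifting) distrib_left mult.assoc mult.commute)
  then show "3*k * cub a b 1 0 (X,Y) + cub c d 0 1 (X,Y) =
         (3*k*a + c - k^3) * (linform 1 0 (X,Y))^3 + (linform k 1 (X,Y))^3"
    by (simp add: cub_def linform_def power2_eq_square power3_eq_cube algebra_simps)
qed

lemma not_ver:
  assumes "\<forall>h\<in>span2 f g. \<not> on_veronese h"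
    and "H = (\<lambda>v. x * f v + y * g v)"
    and "H = (\<lambda>v. c * (linform p q v)^3)" and "H z \<noteq> 0"
  shows False
proof -
  have "H \<in> span2 f g" using assms(2) by (auto simp: span2_def)
  moreover have "H \<noteq> (\<lambda>_. 0)" using assms(4) by auto
  then have "on_veronese H" unfolding on_veronese_def
    using assms(3) by blast
  ultimately show False using assms(1) by auto
qed

lemma normal_case:
  fixes a b c d :: "'a::{alg_closed_field, field_char_0}"
  assumes D: "3*b^2 + 4*d \<noteq> 0"
    and nv: "\<forall>h\<in>span2 (cub a b 1 0) (cub c d 0 1). \<not> on_veronese h"
  shows "concl (cub a b 1 0) (cub c d 0 1)"
proof -
  obtain sq :: 'a where sq: "sq^2 = 9*b^2 + 12*d" using nth_root_exists[of 2] by auto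
  have sq0: "sq \<noteq> 0"
  proof
    assume "sq = 0"
    then have "3*(3*b^2 + 4*d) = 0" using sq by (simp add: algebra_simps)
    then have "(3::'a) = 0 \<or> 3*b^2 + 4*d = 0" by (simp only: mult_eq_0_iff)
    then show False using D by simp
  qed
  define k1 where "k1 = (3*b + sq)/6"
  define k2 where "k2 = (3*b - sq)/6"
  have e1: "3*k1^2 = 3*b*k1 + d" unfolding k1_def using sq
    by (simp add: field_simps power2_eq_square)
  have e2: "3*k2^2 = 3*b*k2 + d" unfolding k2_def using sq
    by (simp add: field_simps power2_eq_square)
  define \<delta> where "\<delta> = k2 - k1"
  have d0: "\<delta> \<noteq> 0" using sq0 by (simp add: \<delta>_def k1_def k2_def field_simps)
  define a1 where "a1 = 3*k1*a + c - k1^3"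
  define a2 where "a2 = 3*k2*a + c - k2^3"
  note H1 = H_form[OF e1, of a c, folded a1_def]
  note H2 = H_form[OF e2, of a c, folded a2_def]
  have a1: "a1 \<noteq> 0"
  proof
    assume "a1 = 0"
    with H1 have ev: "(\<lambda>v. 3*k1 * cub a b 1 0 v + cub c d 0 1 v) = (\<lambda>v. 1 * (linform k1 1 v)^3)" by simp
    show False by (rule not_ver[OF nv _ ev, where x="3*k1" and y=1 and z="(0,1)"]) (simp_all add: linform_def cub_def)
  qed
  have a2: "a2 \<noteq> 0"
  proof
    assume "a2 = 0"
    with H2 have ev: "(\<lambda>v. 3*k2 * cub a b 1 0 v + cub c d 0 1 v) = (\<lambda>v. 1 * (linform k2 1 v)^3)" by simp
    show False by (rule not_ver[OF nv _ ev, where x="3*k2" and y=1 and z="(0,1)"]) (simp_all add: linform_def cub_def)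
  qed
  define A where "A = (\<lambda>v. (linform \<delta> 0 v)^3 + (\<delta>^3/a1) * (linform k1 1 v)^3)"
  define B where "B = (\<lambda>v. (linform \<delta> 0 v)^3 + (\<delta>^3/a2) * (linform \<delta> 0 v + linform k1 1 v)^3)"
  have A: "A = (\<lambda>v. (\<delta>^3/a1*(3*k1)) * cub a b 1 0 v + (\<delta>^3/a1) * cub c d 0 1 v)"
  proof (rule ext)
    fix v
    have "(\<delta>^3/a1*(3*k1)) * cub a b 1 0 v + (\<delta>^3/a1) * cub c d 0 1 v
        = (\<delta>^3/a1) * (3*k1 * cub a b 1 0 v + cub c d 0 1 v)" by (simp add: algebra_simps)
    also have "\<dots> = (\<delta>^3/a1) * (a1 * (linform 1 0 v)^3 + (linform k1 1 v)^3)"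
      using fun_cong[OF H1, of v] by simp
    also have "\<dots> = A v" using a1 unfolding A_def
      by (cases v) (simp add: linform_def field_simps power3_eq_cube)
    finally show "A v = (\<delta>^3/a1*(3*k1)) * cub a b 1 0 v + (\<delta>^3/a1) * cub c d 0 1 v" by simp
  qed
  have B: "B = (\<lambda>v. (\<delta>^3/a2*(3*k2)) * cub a b 1 0 v + (\<delta>^3/a2) * cub c d 0 1 v)"
  proof (rule ext)
    fix v
    have "(\<delta>^3/a2*(3*k2)) * cub a b 1 0 v + (\<delta>^3/a2) * cub c d 0 1 v
        = (\<delta>^3/a2) * (3*k2 * cub a b 1 0 v + cub c d 0 1 v)" by (simp add: algebra_simps)
    also have "\<dots> = (\<delta>^3/a2) * (a2 * (linform 1 0 v)^3 + (linform k2 1 v)^3)"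
      using fun_cong[OF H2, of v] by simp
    also have "\<dots> = B v" using a2 unfolding B_def
      by (cases v) (simp add: linform_def field_simps power3_eq_cube \<delta>_def)
    finally show "B v = (\<delta>^3/a2*(3*k2)) * cub a b 1 0 v + (\<delta>^3/a2) * cub c d 0 1 v" by simp
  qed
  have det: "(\<delta>^3/a1*(3*k1)) * (\<delta>^3/a2) - (\<delta>^3/a2*(3*k2)) * (\<delta>^3/a1) \<noteq> 0"
  proof -
    have "(\<delta>^3/a1*(3*k1)) * (\<delta>^3/a2) - (\<delta>^3/a2*(3*k2)) * (\<delta>^3/a1) = \<delta>^3 * \<delta>^3 * (3 * (k1 - k2)) / (a1*a2)"
      using a1 a2 by (simp add: field_simps)
    moreover have "k1 - k2 \<noteq> 0" using d0 by (simp add: \<delta>_def)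
    ultimately show ?thesis using a1 a2 d0 by simp
  qed
  have "span2 (cub a b 1 0) (cub c d 0 1) = span2 A B"
    unfolding A B by (rule span2_basis[OF det])
  then show ?thesis unfolding concl_def A_def B_def using d0
    by (intro exI[of _ \<delta>] exI[of _ 0] exI[of _ k1] exI[of _ 1] exI[of _ "\<delta>^3/a1"] exI[of _ "\<delta>^3/a2"]) simp
qed



definition D1f :: "'a::comm_ring_1 \<Rightarrow> 'a \<Rightarrow> 'a \<Rightarrow> 'a \<Rightarrow> 'a" where
  "D1f f2 f3 g2 g3 = f2*g3 - f3*g2"
definition D2f :: "'a::comm_ring_1 \<Rightarrow> 'a \<Rightarrow> 'a \<Rightarrow> 'a \<Rightarrow> 'a \<Rightarrow> 'a \<Rightarrow> 'a" where
  "D2f f1 f2 f3 g1 g2 g3 = 3*(g3*f1 - f3*g1)^2 + 4*(f2*g1 - g2*f1)*D1f f2 f3 g2 g3"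

lemma concl_cong: "span2 f g = span2 F G \<Longrightarrow> concl F G \<Longrightarrow> concl f g"
  by (simp add: concl_def)

lemma normalize:
  fixes f0 f1 f2 f3 g0 g1 g2 g3 :: "'a::field"
  assumes D: "D1f f2 f3 g2 g3 \<noteq> 0"
  shows "span2 (cub f0 f1 f2 f3) (cub g0 g1 g2 g3) =
    span2 (cub ((g3*f0 - f3*g0)/D1f f2 f3 g2 g3) ((g3*f1 - f3*g1)/D1f f2 f3 g2 g3) 1 0)
          (cub ((f2*g0 - g2*f0)/D1f f2 f3 g2 g3) ((f2*g1 - g2*f1)/D1f f2 f3 g2 g3) 0 1)"
proof -
  define D where "D = D1f f2 f3 g2 g3"
  have D0: "D \<noteq> 0" using D by (simp add: D_def)
  have det: "(g3/D) * (f2/D) - (-g2/D) * (-f3/D) \<noteq> 0"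
  proof -
    have "(g3/D) * (f2/D) - (-g2/D) * (-f3/D) = (g3*f2 - g2*f3) / (D*D)"
      using D0 by (simp add: diff_divide_distrib)
    also have "g3*f2 - g2*f3 = D" by (simp add: D_def D1f_def algebra_simps)
    finally show ?thesis using D0 by simp
  qed
  have e1: "(\<lambda>v. (g3/D) * cub f0 f1 f2 f3 v + (-f3/D) * cub g0 g1 g2 g3 v)
      = cub ((g3*f0 - f3*g0)/D) ((g3*f1 - f3*g1)/D) 1 0"
  proof (rule ext, clarify)
    fix X Y
    have k: "g3*f2 - f3*g2 = D" by (simp add: D_def D1f_def algebra_simps)
    have "(g3/D) * cub f0 f1 f2 f3 (X,Y) + (-f3/D) * cub g0 g1 g2 g3 (X,Y) =
      ((g3*f0 - f3*g0)*X^3 + (g3*f1-f3*g1)*X^2*Y + (g3*f2 - f3*g2)*X*Y^2)/D"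
      using D0 by (simp add: cub_def field_simps)
    also have "\<dots> = cub ((g3*f0 - f3*g0)/D) ((g3*f1 - f3*g1)/D) 1 0 (X,Y)"
      unfolding k using D0 by (simp add: cub_def field_simps)
    finally show "(g3/D) * cub f0 f1 f2 f3 (X,Y) + (-f3/D) * cub g0 g1 g2 g3 (X,Y) =
       cub ((g3*f0 - f3*g0)/D) ((g3*f1 - f3*g1)/D) 1 0 (X,Y)" .
  qed
  have e2: "(\<lambda>v. (-g2/D) * cub f0 f1 f2 f3 v + (f2/D) * cub g0 g1 g2 g3 v)
      = cub ((f2*g0 - g2*f0)/D) ((f2*g1 - g2*f1)/D) 0 1"
  proof (rule ext, clarify)
    fix X Y
    have k: "f2*g3 - g2*f3 = D" by (simp add: D_def D1f_def algebra_simps)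
    have "(-g2/D) * cub f0 f1 f2 f3 (X,Y) + (f2/D) * cub g0 g1 g2 g3 (X,Y) =
      ((f2*g0 - g2*f0)*X^3 + (f2*g1-g2*f1)*X^2*Y + (f2*g3 - g2*f3)*Y^3)/D"
      using D0 by (simp add: cub_def field_simps)
    also have "\<dots> = cub ((f2*g0 - g2*f0)/D) ((f2*g1 - g2*f1)/D) 0 1 (X,Y)"
      unfolding k using D0 by (simp add: cub_def field_simps)
    finally show "(-g2/D) * cub f0 f1 f2 f3 (X,Y) + (f2/D) * cub g0 g1 g2 g3 (X,Y) =
       cub ((f2*g0 - g2*f0)/D) ((f2*g1 - g2*f1)/D) 0 1 (X,Y)" .
  qed
  have "span2 (cub f0 f1 f2 f3) (cub g0 g1 g2 g3) =
    span2 (\<lambda>v. (g3/D) * cub f0 f1 f2 f3 v + (-f3/D) * cub g0 g1 g2 g3 v)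
          (\<lambda>v. (-g2/D) * cub f0 f1 f2 f3 v + (f2/D) * cub g0 g1 g2 g3 v)"
    by (rule span2_basis[OF det])
  then have "span2 (cub f0 f1 f2 f3) (cub g0 g1 g2 g3) =
    span2 (cub ((g3*f0 - f3*g0)/D) ((g3*f1 - f3*g1)/D) 1 0) (cub ((f2*g0 - g2*f0)/D) ((f2*g1 - g2*f1)/D) 0 1)"
    by (simp only: e1 e2)
  then show ?thesis by (simp only: D_def)
qed

lemma gen_case:
  fixes f0 f1 f2 f3 g0 g1 g2 g3 :: "'a::{alg_closed_field, field_char_0}"
  assumes D: "D1f f2 f3 g2 g3 \<noteq> 0" and D2: "D2f f1 f2 f3 g1 g2 g3 \<noteq> 0"
    and nv: "\<forall>h\<in>span2 (cub f0 f1 f2 f3) (cub g0 g1 g2 g3). \<not> on_veronese h"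
  shows "concl (cub f0 f1 f2 f3) (cub g0 g1 g2 g3)"
proof -
  define D where "D = D1f f2 f3 g2 g3"
  have D0: "D \<noteq> 0" using D by (simp add: D_def)
  note N = normalize[OF D, of f0 f1 g0 g1, folded D_def]
  have "3 * ((g3*f1 - f3*g1)/D)^2 + 4 * ((f2*g1 - g2*f1)/D) = D2f f1 f2 f3 g1 g2 g3 / D^2"
    using D0 by (simp add: D2f_def field_simps D_def power2_eq_square)
  then have "3 * ((g3*f1 - f3*g1)/D)^2 + 4 * ((f2*g1 - g2*f1)/D) \<noteq> 0" using D0 D2 by simp
  from normal_case[OF this] nv N show ?thesis
    by (metis concl_cong)
qed

lemma nv_sh:
  assumes "\<forall>h\<in>span2 f g. \<not> on_veronese h"
  shows "\<forall>h\<in>span2 (sh u f) (sh u g). \<not> on_veronese h"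
  using assms on_veronese_sh mem_span2_sh by blast

lemma poly_nonroot:
  fixes p q :: "'a::field_char_0 poly"
  assumes "p \<noteq> 0" "q \<noteq> 0"
  shows "\<exists>t. poly p t \<noteq> 0 \<and> poly q t \<noteq> 0"
proof -
  have "p * q \<noteq> 0" using assms by simp
  then have "finite {x. poly (p*q) x = 0}" by (rule poly_roots_finite)
  then obtain t where "t \<notin> {x. poly (p*q) x = 0}"
    using ex_new_if_finite[OF infinite_UNIV_char_0] by blast
  then show ?thesis by auto
qed



lemma lemP:
  fixes a b c d :: "'a::{alg_closed_field, field_char_0}"
  assumes nv: "\<forall>h\<in>span2 (cub a b 1 0) (cub c d 0 1). \<not> on_veronese h"
  shows "\<exists>s. D1f (1 - 2*s*b + 3*s^2*a) (0 - s*1 + s^2*b - s^3*a)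
                 (0 - 2*s*d + 3*s^2*c) (1 - s*0 + s^2*d - s^3*c) \<noteq> 0 \<and>
             D2f (b - 3*s*a) (1 - 2*s*b + 3*s^2*a) (0 - s*1 + s^2*b - s^3*a)
                 (d - 3*s*c) (0 - 2*s*d + 3*s^2*c) (1 - s*0 + s^2*d - s^3*c) \<noteq> 0"
proof -
  define p :: "'a poly" where "p = [:1, -2*b, 3*a-d, 2*c, a*d-b*c:]"
  define q0 where "q0 = 4*d + 3*b^2"
  define q1 where "q1 = -12*c - 2*b*d - 18*a*b"
  define q2 where "q2 = -(d^2) + 18*b*c - 18*a*d + 27*a^2"
  define q3 where "q3 = 2*c*d - 12*b^2*c + 18*a*c + 12*a*b*d"
  define q4 where "q4 = 3*c^2 - 4*b*c*d + 4*a*d^2"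
  define q :: "'a poly" where "q = [:q0, q1, q2, q3, q4:]"
  have pe: "poly p s = D1f (1 - 2*s*b + 3*s^2*a) (0 - s*1 + s^2*b - s^3*a)
                 (0 - 2*s*d + 3*s^2*c) (1 - s*0 + s^2*d - s^3*c)" for s
    by (simp add: p_def D1f_def algebra_simps power2_eq_square power3_eq_cube)
  have qe: "poly q s = D2f (b - 3*s*a) (1 - 2*s*b + 3*s^2*a) (0 - s*1 + s^2*b - s^3*a)
                 (d - 3*s*c) (0 - 2*s*d + 3*s^2*c) (1 - s*0 + s^2*d - s^3*c)" for s
    by (simp add: q_def q0_def q1_def q2_def q3_def q4_def D2f_def D1f_def algebra_simps power2_eq_square power3_eq_cube)
  have p0: "p \<noteq> 0" by (simp add: p_def)
  have q0': "q \<noteq> 0"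
  proof
    assume "q = 0"
    then have z: "q0 = 0" "q1 = 0" "q2 = 0" by (simp_all add: q_def)
    have "4*d = -(3*b^2)" using z(1) unfolding q0_def by (simp add: eq_neg_iff_add_eq_0)
    then have dd: "d = -3*b^2/4" by (simp add: field_simps)
    have "3*(8*c + 12*a*b - b^3) = -2*q1 - b*q0" by (simp add: q0_def q1_def algebra_simps power2_eq_square power3_eq_cube)
    then have "3*(8*c + 12*a*b - b^3) = 0" using z by simp
    then have "(3::'a) = 0 \<or> 8*c + 12*a*b - b^3 = 0" by (simp only: mult_eq_0_iff)
    then have E1: "8*c + 12*a*b - b^3 = 0" by simp
    then have cc: "c = b^3/8 - 3*a*b/2" by (simp add: field_simps)
    have "16*q2 = 27*(4*a - b^2)^2 + (6*b^2 - 72*a - q0)*q0 + 36*b*(8*c + 12*a*b - b^3)"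
      by (simp add: q0_def q2_def algebra_simps power2_eq_square power3_eq_cube)
    then have "27*(4*a - b^2)^2 = 0" using z E1 by simp
    then have "(4*a - b^2)^2 = 0" by simp
    then have aa: "a = b^2/4" by (simp add: field_simps)
    have H: "(\<lambda>v. (3*b/2) * cub a b 1 0 v + 1 * cub c d 0 1 v) = (\<lambda>v. 1 * (linform (b/2) 1 v)^3)"
      unfolding cc dd aa by (auto simp: fun_eq_iff cub_def linform_def field_simps power2_eq_square power3_eq_cube)
    show False by (rule not_ver[OF nv _ H, where x="3*b/2" and y=1 and z="(0,1)"]) (simp_all add: linform_def cub_def)
  qed
  from poly_nonroot[OF p0 q0'] obtain s where "poly p s \<noteq> 0" "poly q s \<noteq> 0" by blast
  then show ?thesis using pe qe by metis
qed



lemma lemW: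
  fixes f0 f1 f2 f3 g0 g1 g2 g3 :: "'a::field_char_0"
  assumes ind: "\<forall>\<alpha> \<beta>. (\<lambda>v. \<alpha> * cub f0 f1 f2 f3 v + \<beta> * cub g0 g1 g2 g3 v) = (\<lambda>_. 0) \<longrightarrow> \<alpha> = 0 \<and> \<beta> = 0"
  shows "\<exists>t. D1f (f2 - 2*t*f1 + 3*t^2*f0) (f3 - t*f2 + t^2*f1 - t^3*f0)
                 (g2 - 2*t*g1 + 3*t^2*g0) (g3 - t*g2 + t^2*g1 - t^3*g0) \<noteq> 0"
proof -
  define p :: "'a poly" where "p = [:f2*g3 - f3*g2, 2*f3*g1 - 2*f1*g3,
     3*f0*g3 - 3*f3*g0 + f1*g2 - f2*g1, 2*f2*g0 - 2*f0*g2, f0*g1 - f1*g0:]"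
  have pe: "poly p t = D1f (f2 - 2*t*f1 + 3*t^2*f0) (f3 - t*f2 + t^2*f1 - t^3*f0)
                 (g2 - 2*t*g1 + 3*t^2*g0) (g3 - t*g2 + t^2*g1 - t^3*g0)" for t
    by (simp add: p_def D1f_def algebra_simps power2_eq_square power3_eq_cube)
  have comb: "\<And>a b. (\<lambda>v. a * cub f0 f1 f2 f3 v + (-b) * cub g0 g1 g2 g3 v) =
     cub (a*f0 - b*g0) (a*f1 - b*g1) (a*f2 - b*g2) (a*f3 - b*g3)"
    by (auto simp: fun_eq_iff cub_def algebra_simps)
  have c0: "cub 0 0 0 0 = (\<lambda>_. 0)" by (auto simp: fun_eq_iff cub_def)
  have "p \<noteq> 0"
  proof
    assume "p = 0"
    then have z: "f2*g3 - f3*g2 = 0" "2*f3*g1 - 2*f1*g3 = 0"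
       "3*f0*g3 - 3*f3*g0 + f1*g2 - f2*g1 = 0" "2*f2*g0 - 2*f0*g2 = 0" "f0*g1 - f1*g0 = 0"
      by (simp_all add: p_def)
    have m23: "f2*g3 = f3*g2" using z(1) by simp
    have m13: "f3*g1 = f1*g3" using z(2) by simp
    have m02: "f2*g0 = f0*g2" using z(4) by simp
    have m01: "f0*g1 = f1*g0" using z(5) by simp
    define m03 where "m03 = f0*g3 - f3*g0"
    have m12: "f1*g2 - f2*g1 = -3*m03" using z(3) unfolding m03_def by (simp add: algebra_simps)
    have "(f0*g1 - f1*g0)*(f2*g3 - f3*g2) - (f0*g2 - f2*g0)*(f1*g3 - f3*g1) + m03*(f1*g2 - f2*g1) = 0"
      unfolding m03_def by (simp add: algebra_simps)
    then have "m03 * (-3*m03) = 0" using m23 m13 m02 m01 m12 by simp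
    then have "m03 = 0" by simp
    then have m03': "f0*g3 = f3*g0" and m12': "f1*g2 = f2*g1" using m12 by (simp_all add: m03_def)
    have allz: "g0*f1 - f0*g1 = 0" "g0*f2 - f0*g2 = 0" "g0*f3 - f0*g3 = 0"
      "g1*f0 - f1*g0 = 0" "g1*f2 - f1*g2 = 0" "g1*f3 - f1*g3 = 0"
      "g2*f0 - f2*g0 = 0" "g2*f1 - f2*g1 = 0" "g2*f3 - f2*g3 = 0"
      "g3*f0 - f3*g0 = 0" "g3*f1 - f3*g1 = 0" "g3*f2 - f3*g2 = 0"
      using m23 m13 m02 m01 m03' m12' by (simp_all add: algebra_simps)
    have "(\<lambda>v. g0 * cub f0 f1 f2 f3 v + (-f0) * cub g0 g1 g2 g3 v) = (\<lambda>_. 0)"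
      unfolding comb using allz c0 by (simp add: mult.commute)
    with ind have "g0 = 0 \<and> -f0 = 0" by blast
    then have r0: "f0 = 0" by simp
    have "(\<lambda>v. g1 * cub f0 f1 f2 f3 v + (-f1) * cub g0 g1 g2 g3 v) = (\<lambda>_. 0)"
      unfolding comb using allz c0 by (simp add: mult.commute)
    with ind have "g1 = 0 \<and> -f1 = 0" by blast
    then have r1: "f1 = 0" by simp
    have "(\<lambda>v. g2 * cub f0 f1 f2 f3 v + (-f2) * cub g0 g1 g2 g3 v) = (\<lambda>_. 0)"
      unfolding comb using allz c0 by (simp add: mult.commute)
    with ind have "g2 = 0 \<and> -f2 = 0" by blast
    then have r2: "f2 = 0" by simp
    have "(\<lambda>v. g3 * cub f0 f1 f2 f3 v + (-f3) * cub g0 g1 g2 g3 v) = (\<lambda>_. 0)"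
      unfolding comb using allz c0 by (simp add: mult.commute)
    with ind have "g3 = 0 \<and> -f3 = 0" by blast
    then have r3: "f3 = 0" by simp
    have "(\<lambda>v. 1 * cub f0 f1 f2 f3 v + 0 * cub g0 g1 g2 g3 v) = (\<lambda>_. 0)"
      using r0 r1 r2 r3 by (auto simp: fun_eq_iff cub_def)
    with ind have "(1::'a) = 0 \<and> (0::'a) = 0" by blast
    then show False by simp
  qed
  from poly_nonroot[OF this this] pe show ?thesis by metis
qed



theorem lemma2p2:
  fixes f g :: "'a::{alg_closed_field, field_char_0} \<times> 'a \<Rightarrow> 'a"
  assumes "is_cubic_form f" and "is_cubic_form g"
    and "\<forall>\<alpha> \<beta>. (\<lambda>v. \<alpha> * f v + \<beta> * g v) = (\<lambda>_. 0) \<longrightarrow> \<alpha> = 0 \<and> \<beta> = 0"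
    and "\<forall>h \<in> span2 f g. \<not> on_veronese h"
  shows "\<exists>p q r s a b. p * s - q * r \<noteq> 0 \<and>
           span2 f g =
             span2 (\<lambda>v. (linform p q v)^3 + a * (linform r s v)^3)
                   (\<lambda>v. (linform p q v)^3 + b * (linform p q v + linform r s v)^3)"
proof -
  obtain f0 f1 f2 f3 where fe: "f = cub f0 f1 f2 f3"
    using assms(1) unfolding is_cubic_form_def cub_def by blast
  obtain g0 g1 g2 g3 where ge: "g = cub g0 g1 g2 g3"
    using assms(2) unfolding is_cubic_form_def cub_def by blast
  have ind: "\<forall>\<alpha> \<beta>. (\<lambda>v. \<alpha> * cub f0 f1 f2 f3 v + \<beta> * cub g0 g1 g2 g3 v) = (\<lambda>_. 0) \<longrightarrow> \<alpha> = 0 \<and> \<beta> = 0"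
    using assms(3) fe ge by simp
  have nv0: "\<forall>h\<in>span2 (cub f0 f1 f2 f3) (cub g0 g1 g2 g3). \<not> on_veronese h"
    using assms(4) fe ge by simp
  from lemW[OF ind] obtain t where t: "D1f (f2 - 2*t*f1 + 3*t^2*f0) (f3 - t*f2 + t^2*f1 - t^3*f0)
                 (g2 - 2*t*g1 + 3*t^2*g0) (g3 - t*g2 + t^2*g1 - t^3*g0) \<noteq> 0" by blast
  define f1' where "f1' = f1 - 3*t*f0"
  define f2' where "f2' = f2 - 2*t*f1 + 3*t^2*f0"
  define f3' where "f3' = f3 - t*f2 + t^2*f1 - t^3*f0"
  define g1' where "g1' = g1 - 3*t*g0"
  define g2' where "g2' = g2 - 2*t*g1 + 3*t^2*g0"
  define g3' where "g3' = g3 - t*g2 + t^2*g1 - t^3*g0"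
  have shf: "sh t (cub f0 f1 f2 f3) = cub f0 f1' f2' f3'"
    unfolding f1'_def f2'_def f3'_def by (rule sh_cub)
  have shg: "sh t (cub g0 g1 g2 g3) = cub g0 g1' g2' g3'"
    unfolding g1'_def g2'_def g3'_def by (rule sh_cub)
  have nv1: "\<forall>h\<in>span2 (cub f0 f1' f2' f3') (cub g0 g1' g2' g3'). \<not> on_veronese h"
    using nv_sh[OF nv0, of t] unfolding shf shg .
  have D: "D1f f2' f3' g2' g3' \<noteq> 0" using t unfolding f2'_def f3'_def g2'_def g3'_def .
  define a where "a = (g3'*f0 - f3'*g0)/D1f f2' f3' g2' g3'"
  define b where "b = (g3'*f1' - f3'*g1')/D1f f2' f3' g2' g3'"
  define c where "c = (f2'*g0 - g2'*f0)/D1f f2' f3' g2' g3'"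
  define d where "d = (f2'*g1' - g2'*f1')/D1f f2' f3' g2' g3'"
  have N: "span2 (cub f0 f1' f2' f3') (cub g0 g1' g2' g3') = span2 (cub a b 1 0) (cub c d 0 1)"
    unfolding a_def b_def c_def d_def by (rule normalize[OF D])
  have nv2: "\<forall>h\<in>span2 (cub a b 1 0) (cub c d 0 1). \<not> on_veronese h"
    using nv1 unfolding N .
  from lemP[OF nv2] obtain s where s:
    "D1f (1 - 2*s*b + 3*s^2*a) (0 - s*1 + s^2*b - s^3*a)
                 (0 - 2*s*d + 3*s^2*c) (1 - s*0 + s^2*d - s^3*c) \<noteq> 0"
    "D2f (b - 3*s*a) (1 - 2*s*b + 3*s^2*a) (0 - s*1 + s^2*b - s^3*a)
                 (d - 3*s*c) (0 - 2*s*d + 3*s^2*c) (1 - s*0 + s^2*d - s^3*c) \<noteq> 0"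
    by blast
  have sh1: "sh s (cub a b 1 0) = cub a (b - 3*s*a) (1 - 2*s*b + 3*s^2*a) (0 - s*1 + s^2*b - s^3*a)"
    by (rule sh_cub)
  have sh2: "sh s (cub c d 0 1) = cub c (d - 3*s*c) (0 - 2*s*d + 3*s^2*c) (1 - s*0 + s^2*d - s^3*c)"
    by (rule sh_cub)
  have nv3: "\<forall>h\<in>span2 (cub a (b - 3*s*a) (1 - 2*s*b + 3*s^2*a) (0 - s*1 + s^2*b - s^3*a))
      (cub c (d - 3*s*c) (0 - 2*s*d + 3*s^2*c) (1 - s*0 + s^2*d - s^3*c)). \<not> on_veronese h"
    using nv_sh[OF nv2, of s] unfolding sh1 sh2 .
  have "concl (cub a (b - 3*s*a) (1 - 2*s*b + 3*s^2*a) (0 - s*1 + s^2*b - s^3*a))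
      (cub c (d - 3*s*c) (0 - 2*s*d + 3*s^2*c) (1 - s*0 + s^2*d - s^3*c))"
    by (rule gen_case[OF s(1) s(2) nv3])
  then have "concl (sh s (cub a b 1 0)) (sh s (cub c d 0 1))" unfolding sh1 sh2 .
  then have "concl (cub a b 1 0) (cub c d 0 1)" by (rule concl_sh)
  then have "concl (cub f0 f1' f2' f3') (cub g0 g1' g2' g3')" by (rule concl_cong[OF N])
  then have "concl (sh t (cub f0 f1 f2 f3)) (sh t (cub g0 g1 g2 g3))" unfolding shf shg .
  then have "concl f g" unfolding fe ge by (rule concl_sh)
  then show ?thesis unfolding concl_def .
qed

end
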